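(* Let $(V,Y,\mathbf 1,\omega)$ be a vertex operator algebra, $g$ an automorphism of $V$ of finite order $T$, and $n,m\in(1/T)\mathbb N$. Then $g$ is an automorphism of the vertex algebra $\exp(V,\omega)$, and $A_{g,n}(V,\omega)=\tilde A_{g,n}(\exp(V,\omega))$ and $A_{g,n,m}(V,\omega)=\tilde A_{g,n,m}(\exp(V,\omega))$ (equal subspaces $O_{g,n}(V)=\tilde O_{g,n}(\exp(V,\omega))$, $O_{g,n,m}(V)=\tilde O_{g,n,m}(\exp(V,\omega))$ and equal products).
   Context: A vertex operator algebra $(V,Y,\mathbf 1,\omega)$ is a vertex algebra with $V=\bigoplus_{n\in\mathbb Z}V_n$, $\dim V_n<\infty$, $V_n=0$ for $n\ll0$, $\omega\in V_2$, $L(m)=\omega_{m+1}$ satisfying the Virasoro relations with central charge $c$, $L(0)|_{V_n}=n$, $Y(L(-1)w,z)=\frac d{dz}Y(w,z)$; $\mathrm{wt}\,u=n$ for $u\in V_n$. An automorphism $g$ is a vertex algebra automorphism with $g\omega=\omega$; $V^r=\{v:gv=e^{-2\pi\sqrt{-1}r/T}v\}$. $\exp(V,\omega)$ is the vertex algebra on $V$ with vacuum $\mathbf 1$ and vertex operator $Y[u,z]=Y(e^{zL(0)}u,e^z-1)$ (its $\mathcal D$-operator is $L(-1)+L(0)$). For $k,l\in\{0,\dots,T-1\}$, $\delta_k(l)=1$ if $k\ge l$, $0$ if $k<l$, $\delta_k(T)=0$; $n=\lfloor n\rfloor+\bar n/T$. VOA side: for homogeneous $u\in V^r$, $v\in V$,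 $m,n,p\in(1/T)\mathbb N$ with $\bar p-\bar n\equiv r$: $u*_{g,m,p}^{\,n}v=\sum_{i=0}^{\lfloor p\rfloor}(-1)^i\binom{\lfloor m\rfloor+\lfloor n\rfloor-\lfloor p\rfloor-1+\delta_{\bar m}(r)+\delta_{\bar n}(T-r)+i}{i}\operatorname{Res}_z\frac{(1+z)^{\mathrm{wt}u-1+\lfloor m\rfloor+\delta_{\bar m}(r)+r/T}}{z^{\lfloor m\rfloor+\lfloor n\rfloor-\lfloor p\rfloor+\delta_{\bar m}(r)+\delta_{\bar n}(T-r)+i}}Y(u,z)v$, else $0$; $u\circ_{g,m}^{\,n}v=\operatorname{Res}_z\frac{(1+z)^{\mathrm{wt}u-1+\lfloor m\rfloor+\delta_{\bar m}(r)+r/T}}{z^{\lfloor m\rfloor+\lfloor n\rfloor+\delta_{\bar m}(r)+\delta_{\bar n}(T-r)+1}}Y(u,z)v$; $O'_{g,n,m}(V)=\mathrm{span}\{u\circ_{g,m}^{\,n}v\}+\mathrm{span}\{(L(-1)+L(0)+m-n)u\}$; $O''_{g,n,m}$, $O'''_{g,n,m}$, $O_{g,n,m}=O'+O''+O'''$ are defined as below with $*$ in place of $\bullet$ and $O'$ in place of $\tilde O'$; $O_{g,n}=O'_{g,n,n}$, $A_{g,n}(V,\omega)=V/O_{g,n}(V)$ with product $*_{g,n,n}^{\,n}$, $A_{g,n,m}(V,\omega)=V/O_{g,n,m}(V)$ with left action $*_{g,m,n}^{\,n}$ and right action $*_{g,m,m}^{\,n}$. Vertex algebra side (for a vertex algebra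 $(V',Y',\mathbf 1)$ with $\mathcal D'v=v_{-2}\mathbf 1$ and automorphism $g$): for $u\in V'^r$, $\bar p-\bar n\equiv r$: $u\bullet_{g,m,p}^{\,n}v=\sum_{i=0}^{\lfloor p\rfloor}(-1)^i\binom{\lfloor m\rfloor+\lfloor n\rfloor-\lfloor p\rfloor-1+\delta_{\bar m}(r)+\delta_{\bar n}(T-r)+i}{i}\operatorname{Res}_x\frac{e^{x(\lfloor m\rfloor+\delta_{\bar m}(r)+r/T)}}{(e^x-1)^{\lfloor m\rfloor+\lfloor n\rfloor-\lfloor p\rfloor+\delta_{\bar m}(r)+\delta_{\bar n}(T-r)+i}}Y'(u,x)v$, else $0$; $u\diamond_{g,m}^{\,n}v=\operatorname{Res}_x\frac{e^{x(\delta_{\bar m}(r)+\lfloor m\rfloor+r/T)}}{(e^x-1)^{\lfloor m\rfloor+\lfloor n\rfloor+\delta_{\bar m}(r)+\delta_{\bar n}(T-r)+1}}Y'(u,x)v$; $\tilde O'_{g,n,m}=\mathrm{span}\{u\diamond_{g,m}^{\,n}v\}+\mathrm{span}\{(\mathcal D'+m-n)u\}$; $\tilde O''_{g,n,m}$ is the span of all $u\bullet_{g,m,p_3}^{\,n}\big((a\bullet_{g,p_1,p_2}^{\,p_3}b)\bullet_{g,m,p_1}^{\,p_3}c-a\bullet_{g,m,p_2}^{\,p_3}(b\bullet_{g,m,p_1}^{\,p_2}c)\big)$; $\tilde O'''_{g,n,m}=\sum_{p_1,p_2}(V'\bullet_{g,p_1,p_2}^{\,n}\tilde O'_{g,p_2,p_1})\bullet_{g,m,p_1}^{\,n}V'$;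 $\tilde O_{g,n,m}=\tilde O'+\tilde O''+\tilde O'''$; $\tilde O_{g,n}=\tilde O'_{g,n,n}$; $\tilde A_{g,n}(V')=V'/\tilde O_{g,n}$ with product $\bullet_{g,n,n}^{\,n}$; $\tilde A_{g,n,m}(V')=V'/\tilde O_{g,n,m}$ with left action $\bullet_{g,m,n}^{\,n}$ and right action $\bullet_{g,m,m}^{\,n}$. *)

theory Defs
  imports Complex_Main "HOL-Computational_Algebra.Formal_Laurent_Series"
begin

definition fsum :: "('i \<Rightarrow> 'v::ab_group_add) \<Rightarrow> 'v" where
  "fsum f = sum f {i. f i \<noteq> 0}"

text \<open>The underlying space is a type 'v with complex scalar multiplication sc.
  Y u n v denotes the mode u_n v, i.e. Y(u,z)v = sum_n u_n v z^(-n-1).\<close>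

definition vertex_algebra ::
  "(complex \<Rightarrow> 'v::ab_group_add \<Rightarrow> 'v) \<Rightarrow> ('v \<Rightarrow> int \<Rightarrow> 'v \<Rightarrow> 'v) \<Rightarrow> 'v \<Rightarrow> bool" where
  "vertex_algebra sc Y vac \<longleftrightarrow>
     vector_space sc \<and>
     (\<forall>u n. Vector_Spaces.linear sc sc (Y u n)) \<and>
     (\<forall>n v. Vector_Spaces.linear sc sc (\<lambda>u. Y u n v)) \<and>
     (\<forall>u v. \<exists>N. \<forall>n\<ge>N. Y u n v = 0) \<and>
     (\<forall>n v. Y vac n v = (if n = -1 then v else 0)) \<and>
     (\<forall>u. Y u (-1) vac = u \<and> (\<forall>n\<ge>0. Y u n vac = 0)) \<and>
     (\<forall>u v w l m n.
        fsum (\<lambda>i::nat. sc ((of_int m :: complex) gchoose i) (Y (Y u (l + int i) v) (m + n - int i) w))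
      = fsum (\<lambda>i::nat. sc ((-1) ^ i * ((of_int l :: complex) gchoose i))
            (Y u (l + m - int i) (Y v (n + int i) w)
             - sc ((-1) powi l) (Y v (l + n - int i) (Y u (m + int i) w)))))"

definition va_aut ::
  "(complex \<Rightarrow> 'v::ab_group_add \<Rightarrow> 'v) \<Rightarrow> ('v \<Rightarrow> int \<Rightarrow> 'v \<Rightarrow> 'v) \<Rightarrow> 'v \<Rightarrow> ('v \<Rightarrow> 'v) \<Rightarrow> bool" where
  "va_aut sc Y vac g \<longleftrightarrow> bij g \<and> Vector_Spaces.linear sc sc g \<and> g vac = vac \<and>
     (\<forall>u n v. g (Y u n v) = Y (g u) n (g v))"

definition finite_order :: "('v \<Rightarrow> 'v) \<Rightarrow> nat \<Rightarrow> bool" where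
  "finite_order g T \<longleftrightarrow> T > 0 \<and> g ^^ T = id \<and> (\<forall>k. 0 < k \<and> k < T \<longrightarrow> g ^^ k \<noteq> id)"

definition Lop :: "('v \<Rightarrow> int \<Rightarrow> 'v \<Rightarrow> 'v) \<Rightarrow> 'v \<Rightarrow> int \<Rightarrow> 'v \<Rightarrow> 'v" where
  "Lop Y om m = Y om (m + 1)"

definition wtspace :: "(complex \<Rightarrow> 'v::ab_group_add \<Rightarrow> 'v) \<Rightarrow> ('v \<Rightarrow> int \<Rightarrow> 'v \<Rightarrow> 'v) \<Rightarrow> 'v \<Rightarrow> int \<Rightarrow> 'v set" where
  "wtspace sc Y om k = {v. Lop Y om 0 v = sc (of_int k) v}"

definition VOA ::
  "(complex \<Rightarrow> 'v::ab_group_add \<Rightarrow> 'v) \<Rightarrow> ('v \<Rightarrow> int \<Rightarrow> 'v \<Rightarrow> 'v) \<Rightarrow> 'v \<Rightarrow> 'v \<Rightarrow> complex \<Rightarrow> bool" where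
  "VOA sc Y vac om c \<longleftrightarrow>
     vertex_algebra sc Y vac \<and>
     (\<forall>v. \<exists>S. finite S \<and> v \<in> module.span sc (\<Union>k\<in>S. wtspace sc Y om k)) \<and>
     (\<forall>k. \<exists>B. finite B \<and> wtspace sc Y om k \<subseteq> module.span sc B) \<and>
     (\<exists>N. \<forall>k<N. wtspace sc Y om k = {0}) \<and>
     om \<in> wtspace sc Y om 2 \<and>
     (\<forall>m n v. Lop Y om m (Lop Y om n v) - Lop Y om n (Lop Y om m v)
        = sc (of_int (m - n)) (Lop Y om (m + n) v)
          + (if m + n = 0 then sc ((of_int m ^ 3 - of_int m) / 12 * c) v else 0)) \<and>
     (\<forall>u n v. Y (Lop Y om (-1) u) n v = sc (- of_int n) (Y u (n - 1) v))"

definition voa_aut ::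
  "(complex \<Rightarrow> 'v::ab_group_add \<Rightarrow> 'v) \<Rightarrow> ('v \<Rightarrow> int \<Rightarrow> 'v \<Rightarrow> 'v) \<Rightarrow> 'v \<Rightarrow> 'v \<Rightarrow> ('v \<Rightarrow> 'v) \<Rightarrow> bool" where
  "voa_aut sc Y vac om g \<longleftrightarrow> va_aut sc Y vac g \<and> g om = om"

definition wtproj :: "(complex \<Rightarrow> 'v::ab_group_add \<Rightarrow> 'v) \<Rightarrow> ('v \<Rightarrow> int \<Rightarrow> 'v \<Rightarrow> 'v) \<Rightarrow> 'v \<Rightarrow> int \<Rightarrow> 'v \<Rightarrow> 'v" where
  "wtproj sc Y om k v = (THE w. w \<in> wtspace sc Y om k \<and>
      v - w \<in> module.span sc (\<Union>j\<in>-{k}. wtspace sc Y om j))"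

definition wts :: "(complex \<Rightarrow> 'v::ab_group_add \<Rightarrow> 'v) \<Rightarrow> ('v \<Rightarrow> int \<Rightarrow> 'v \<Rightarrow> 'v) \<Rightarrow> 'v \<Rightarrow> 'v \<Rightarrow> int set" where
  "wts sc Y om v = {k. wtproj sc Y om k v \<noteq> 0}"

text \<open>Component of v in V^r = {v. g v = e^(-2 pi i r/T) v}, 0 <= r < T.\<close>
definition gproj :: "(complex \<Rightarrow> 'v::ab_group_add \<Rightarrow> 'v) \<Rightarrow> ('v \<Rightarrow> 'v) \<Rightarrow> nat \<Rightarrow> nat \<Rightarrow> 'v \<Rightarrow> 'v" where
  "gproj sc g T r v = sc (1 / of_nat T)
     (\<Sum>j<T. sc (exp (2 * pi * \<i> * of_nat j * of_nat r / of_nat T)) ((g ^^ j) v))"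

text \<open>An element n of (1/T)N is encoded by the natural number N = T n; then
  floor n = N div T and bar n = N mod T.\<close>

definition dlt :: "nat \<Rightarrow> nat \<Rightarrow> nat \<Rightarrow> int" where
  "dlt T k l = (if l = T then 0 else if k \<ge> l then 1 else 0)"

definition admissible :: "nat \<Rightarrow> nat \<Rightarrow> nat \<Rightarrow> nat \<Rightarrow> bool" where
  "admissible T r p n \<longleftrightarrow> (int (p mod T) - int (n mod T) - int r) mod int T = 0"

text \<open>Res_z (1+z)^alpha z^(-K) Y(u,z) v\<close>
definition resz :: "(complex \<Rightarrow> 'v::ab_group_add \<Rightarrow> 'v) \<Rightarrow> ('v \<Rightarrow> int \<Rightarrow> 'v \<Rightarrow> 'v) \<Rightarrow> complex \<Rightarrow> int \<Rightarrow> 'v \<Rightarrow> 'v \<Rightarrow> 'v" where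
  "resz sc Y alpha K u v = fsum (\<lambda>j::nat. sc (alpha gchoose j) (Y u (int j - K) v))"

text \<open>u *_{g,m,p}^n v for u homogeneous of weight k in V^r.\<close>
definition vstarH :: "(complex \<Rightarrow> 'v::ab_group_add \<Rightarrow> 'v) \<Rightarrow> ('v \<Rightarrow> int \<Rightarrow> 'v \<Rightarrow> 'v) \<Rightarrow> nat \<Rightarrow>
     int \<Rightarrow> nat \<Rightarrow> nat \<Rightarrow> nat \<Rightarrow> nat \<Rightarrow> 'v \<Rightarrow> 'v \<Rightarrow> 'v" where
  "vstarH sc Y T k r m p n u v =
    (if admissible T r p n then
      (let A = int (m div T) + int (n div T) - int (p div T) - 1 + dlt T (m mod T) r + dlt T (n mod T) (T - r);
           alpha = of_int (k - 1 + int (m div T) + dlt T (m mod T) r) + of_nat r / of_nat T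
       in \<Sum>i\<le>p div T. sc ((-1) ^ i * ((of_int (A + int i) :: complex) gchoose i))
             (resz sc Y alpha (A + 1 + int i) u v))
     else 0)"

definition vcircH :: "(complex \<Rightarrow> 'v::ab_group_add \<Rightarrow> 'v) \<Rightarrow> ('v \<Rightarrow> int \<Rightarrow> 'v \<Rightarrow> 'v) \<Rightarrow> nat \<Rightarrow>
     int \<Rightarrow> nat \<Rightarrow> nat \<Rightarrow> nat \<Rightarrow> 'v \<Rightarrow> 'v \<Rightarrow> 'v" where
  "vcircH sc Y T k r m n u v =
    resz sc Y (of_int (k - 1 + int (m div T) + dlt T (m mod T) r) + of_nat r / of_nat T)
      (int (m div T) + int (n div T) + dlt T (m mod T) r + dlt T (n mod T) (T - r) + 1) u v"

definition vstar :: "(complex \<Rightarrow> 'v::ab_group_add \<Rightarrow> 'v) \<Rightarrow> ('v \<Rightarrow> int \<Rightarrow> 'v \<Rightarrow> 'v) \<Rightarrow> 'v \<Rightarrow> ('v \<Rightarrow> 'v) \<Rightarrow> nat \<Rightarrow>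
     nat \<Rightarrow> nat \<Rightarrow> nat \<Rightarrow> 'v \<Rightarrow> 'v \<Rightarrow> 'v" where
  "vstar sc Y om g T m p n u v =
     (\<Sum>k\<in>wts sc Y om u. \<Sum>r<T. vstarH sc Y T k r m p n (gproj sc g T r (wtproj sc Y om k u)) v)"

definition vcirc :: "(complex \<Rightarrow> 'v::ab_group_add \<Rightarrow> 'v) \<Rightarrow> ('v \<Rightarrow> int \<Rightarrow> 'v \<Rightarrow> 'v) \<Rightarrow> 'v \<Rightarrow> ('v \<Rightarrow> 'v) \<Rightarrow> nat \<Rightarrow>
     nat \<Rightarrow> nat \<Rightarrow> 'v \<Rightarrow> 'v \<Rightarrow> 'v" where
  "vcirc sc Y om g T m n u v =
     (\<Sum>k\<in>wts sc Y om u. \<Sum>r<T. vcircH sc Y T k r m n (gproj sc g T r (wtproj sc Y om k u)) v)"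

definition O1V :: "(complex \<Rightarrow> 'v::ab_group_add \<Rightarrow> 'v) \<Rightarrow> ('v \<Rightarrow> int \<Rightarrow> 'v \<Rightarrow> 'v) \<Rightarrow> 'v \<Rightarrow> ('v \<Rightarrow> 'v) \<Rightarrow> nat \<Rightarrow>
     nat \<Rightarrow> nat \<Rightarrow> 'v set" where
  "O1V sc Y om g T n m = module.span sc
     ({vcirc sc Y om g T m n u v | u v. True} \<union>
      {Lop Y om (-1) u + Lop Y om 0 u + sc ((of_nat m - of_nat n) / of_nat T) u | u. True})"

text \<open>star m p n u v stands for u *_{g,m,p}^n v; O1 n m stands for O'_{g,n,m}.\<close>
definition O2 :: "(complex \<Rightarrow> 'v::ab_group_add \<Rightarrow> 'v) \<Rightarrow> (nat \<Rightarrow> nat \<Rightarrow> nat \<Rightarrow> 'v \<Rightarrow> 'v \<Rightarrow> 'v) \<Rightarrow>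
     nat \<Rightarrow> nat \<Rightarrow> 'v set" where
  "O2 sc star n m = module.span sc
     {star m p3 n u (star m p1 p3 (star p1 p2 p3 a b) c - star m p2 p3 a (star m p1 p2 b c))
      | u a b c p1 p2 p3. True}"

definition O3 :: "(complex \<Rightarrow> 'v::ab_group_add \<Rightarrow> 'v) \<Rightarrow> (nat \<Rightarrow> nat \<Rightarrow> nat \<Rightarrow> 'v \<Rightarrow> 'v \<Rightarrow> 'v) \<Rightarrow>
     (nat \<Rightarrow> nat \<Rightarrow> 'v set) \<Rightarrow> nat \<Rightarrow> nat \<Rightarrow> 'v set" where
  "O3 sc star O1 n m = module.span sc
     {star m p1 n (star p1 p2 n u x) w | u x w p1 p2. x \<in> O1 p2 p1}"

definition Ofull :: "(complex \<Rightarrow> 'v::ab_group_add \<Rightarrow> 'v) \<Rightarrow> (nat \<Rightarrow> nat \<Rightarrow> nat \<Rightarrow> 'v \<Rightarrow> 'v \<Rightarrow> 'v) \<Rightarrow>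
     (nat \<Rightarrow> nat \<Rightarrow> 'v set) \<Rightarrow> nat \<Rightarrow> nat \<Rightarrow> 'v set" where
  "Ofull sc star O1 n m = module.span sc (O1 n m \<union> O2 sc star n m \<union> O3 sc star O1 n m)"

definition resx :: "(complex \<Rightarrow> 'v::ab_group_add \<Rightarrow> 'v) \<Rightarrow> ('v \<Rightarrow> int \<Rightarrow> 'v \<Rightarrow> 'v) \<Rightarrow> complex fls \<Rightarrow> 'v \<Rightarrow> 'v \<Rightarrow> 'v" where
  "resx sc Y F u v = fsum (\<lambda>j::int. sc (fls_nth F j) (Y u j v))"

definition expfrac :: "complex \<Rightarrow> int \<Rightarrow> complex fls" where
  "expfrac beta K = fps_to_fls (fps_exp beta) * (fps_to_fls (fps_exp 1 - 1)) powi (- K)"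

definition bulletH :: "(complex \<Rightarrow> 'v::ab_group_add \<Rightarrow> 'v) \<Rightarrow> ('v \<Rightarrow> int \<Rightarrow> 'v \<Rightarrow> 'v) \<Rightarrow> nat \<Rightarrow>
     nat \<Rightarrow> nat \<Rightarrow> nat \<Rightarrow> nat \<Rightarrow> 'v \<Rightarrow> 'v \<Rightarrow> 'v" where
  "bulletH sc Y T r m p n u v =
    (if admissible T r p n then
      (let A = int (m div T) + int (n div T) - int (p div T) - 1 + dlt T (m mod T) r + dlt T (n mod T) (T - r);
           beta = of_int (int (m div T) + dlt T (m mod T) r) + of_nat r / of_nat T
       in \<Sum>i\<le>p div T. sc ((-1) ^ i * ((of_int (A + int i) :: complex) gchoose i))
             (resx sc Y (expfrac beta (A + 1 + int i)) u v))
     else 0)"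

definition diamondH :: "(complex \<Rightarrow> 'v::ab_group_add \<Rightarrow> 'v) \<Rightarrow> ('v \<Rightarrow> int \<Rightarrow> 'v \<Rightarrow> 'v) \<Rightarrow> nat \<Rightarrow>
     nat \<Rightarrow> nat \<Rightarrow> nat \<Rightarrow> 'v \<Rightarrow> 'v \<Rightarrow> 'v" where
  "diamondH sc Y T r m n u v =
    resx sc Y (expfrac (of_int (dlt T (m mod T) r + int (m div T)) + of_nat r / of_nat T)
      (int (m div T) + int (n div T) + dlt T (m mod T) r + dlt T (n mod T) (T - r) + 1)) u v"

definition bullet :: "(complex \<Rightarrow> 'v::ab_group_add \<Rightarrow> 'v) \<Rightarrow> ('v \<Rightarrow> int \<Rightarrow> 'v \<Rightarrow> 'v) \<Rightarrow> ('v \<Rightarrow> 'v) \<Rightarrow> nat \<Rightarrow>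
     nat \<Rightarrow> nat \<Rightarrow> nat \<Rightarrow> 'v \<Rightarrow> 'v \<Rightarrow> 'v" where
  "bullet sc Y g T m p n u v = (\<Sum>r<T. bulletH sc Y T r m p n (gproj sc g T r u) v)"

definition diamond :: "(complex \<Rightarrow> 'v::ab_group_add \<Rightarrow> 'v) \<Rightarrow> ('v \<Rightarrow> int \<Rightarrow> 'v \<Rightarrow> 'v) \<Rightarrow> ('v \<Rightarrow> 'v) \<Rightarrow> nat \<Rightarrow>
     nat \<Rightarrow> nat \<Rightarrow> 'v \<Rightarrow> 'v \<Rightarrow> 'v" where
  "diamond sc Y g T m n u v = (\<Sum>r<T. diamondH sc Y T r m n (gproj sc g T r u) v)"

text \<open>tilde O'_{g,n,m}(V'), with D' v = v_{-2} 1.\<close>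
definition O1A :: "(complex \<Rightarrow> 'v::ab_group_add \<Rightarrow> 'v) \<Rightarrow> ('v \<Rightarrow> int \<Rightarrow> 'v \<Rightarrow> 'v) \<Rightarrow> 'v \<Rightarrow> ('v \<Rightarrow> 'v) \<Rightarrow> nat \<Rightarrow>
     nat \<Rightarrow> nat \<Rightarrow> 'v set" where
  "O1A sc Y vac g T n m = module.span sc
     ({diamond sc Y g T m n u v | u v. True} \<union>
      {Y u (-2) vac + sc ((of_nat m - of_nat n) / of_nat T) u | u. True})"

text \<open>Modes of Y[u,z] = Y(e^(z L(0)) u, e^z - 1): u[n] = Res_z z^n Y[u,z].\<close>
definition expY :: "(complex \<Rightarrow> 'v::ab_group_add \<Rightarrow> 'v) \<Rightarrow> ('v \<Rightarrow> int \<Rightarrow> 'v \<Rightarrow> 'v) \<Rightarrow> 'v \<Rightarrow>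
     'v \<Rightarrow> int \<Rightarrow> 'v \<Rightarrow> 'v" where
  "expY sc Y om u n v =
     (\<Sum>k\<in>wts sc Y om u. fsum (\<lambda>j::int.
        sc (fls_nth (expfrac (of_int k) (j + 1)) (- n - 1)) (Y (wtproj sc Y om k u) j v)))"

end

theory Submission
  imports Defs
begin


lemma fsum_eq:
  assumes "finite S" "\<And>i. i \<notin> S \<Longrightarrow> f i = 0"
  shows "fsum f = sum f S"
  unfolding fsum_def by (rule sum.mono_neutral_left) (use assms in auto)

lemma add_sum: fixes h :: "'a::ab_group_add \<Rightarrow> 'b::ab_group_add" shows "(\<And>a b. h (a+b) = h a + h b) \<Longrightarrow> h (sum f S) = (\<Sum>i\<in>S. h (f i))"
  using additive.sum[of h] unfolding additive_def by blast
lemma add_zero: fixes h :: "'a::ab_group_add \<Rightarrow> 'b::ab_group_add" shows "(\<And>a b. h (a+b) = h a + h b) \<Longrightarrow> h 0 = 0"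
  using additive.zero[of h] unfolding additive_def by blast
lemma add_diff: fixes h :: "'a::ab_group_add \<Rightarrow> 'b::ab_group_add" shows "(\<And>a b. h (a+b) = h a + h b) \<Longrightarrow> h (x - y) = h x - h y"
  using additive.diff[of h] unfolding additive_def by blast

lemma add_fsum:
  fixes h :: "'a::ab_group_add \<Rightarrow> 'b::ab_group_add"
  assumes "\<And>a b. h (a+b) = h a + h b" "inj h"
  shows "h (fsum f) = fsum (\<lambda>i. h (f i))"
proof (cases "finite {i. f i \<noteq> 0}")
  case True
  have h0: "h 0 = 0" using add_zero assms(1) by blast
  have "h (fsum f) = (\<Sum>i\<in>{i. f i \<noteq> 0}. h (f i))" unfolding fsum_def by (rule add_sum[OF assms(1)])
  also have "\<dots> = fsum (\<lambda>i. h (f i))" by (rule fsum_eq[symmetric]) (use True h0 in auto)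
  finally show ?thesis .
next
  case False
  have h0: "h 0 = 0" using add_zero assms(1) by blast
  have "{i. h (f i) \<noteq> 0} = {i. f i \<noteq> 0}" using h0 assms(2) by (auto simp: inj_def)
  then show ?thesis using False h0 unfolding fsum_def by simp
qed

locale ctx =
  fixes sc :: "complex \<Rightarrow> 'v::ab_group_add \<Rightarrow> 'v" and Y :: "'v \<Rightarrow> int \<Rightarrow> 'v \<Rightarrow> 'v"
    and vac om :: 'v and c :: complex and g :: "'v \<Rightarrow> 'v"
  assumes VOA: "VOA sc Y vac om c" and AUT: "voa_aut sc Y vac om g"
begin

lemma VA: "vertex_algebra sc Y vac" using VOA unfolding VOA_def by blast

sublocale V: vector_space sc using VA unfolding vertex_algebra_def by blast

lemma linY1: "Vector_Spaces.linear sc sc (Y u n)" using VA unfolding vertex_algebra_def by blast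
lemma linY2: "Vector_Spaces.linear sc sc (\<lambda>u. Y u n v)" using VA unfolding vertex_algebra_def by blast
lemma Yadd1: "Y u n (a + b) = Y u n a + Y u n b"
  using linY1[of u n] unfolding Vector_Spaces.linear_iff by blast
lemma Ysc1: "Y u n (sc t a) = sc t (Y u n a)"
  using linY1[of u n] unfolding Vector_Spaces.linear_iff by blast
lemma Yadd2: "Y (a + b) n v = Y a n v + Y b n v"
  using linY2[of n v] unfolding Vector_Spaces.linear_iff by blast
lemma Ysc2: "Y (sc t a) n v = sc t (Y a n v)"
  using linY2[of n v] unfolding Vector_Spaces.linear_iff by blast
lemma Y01[simp]: "Y u n 0 = 0" using add_zero[of "Y u n", OF Yadd1] .
lemma Y02[simp]: "Y 0 n v = 0" using add_zero[of "\<lambda>a. Y a n v", OF Yadd2] .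
lemma Ysum2: "Y (sum f S) n v = (\<Sum>i\<in>S. Y (f i) n v)" using add_sum[of "\<lambda>a. Y a n v", OF Yadd2] .
lemma Ysum1: "Y u n (sum f S) = (\<Sum>i\<in>S. Y u n (f i))" using add_sum[of "Y u n", OF Yadd1] .
lemma Ydiff1: "Y u n (a - b) = Y u n a - Y u n b" using add_diff[of "Y u n", OF Yadd1] .
lemma Ydiff2: "Y (a - b) n v = Y a n v - Y b n v" using add_diff[of "\<lambda>a. Y a n v", OF Yadd2] .
lemma trunc: "\<exists>N. \<forall>n\<ge>N. Y u n v = 0" using VA unfolding vertex_algebra_def by blast
lemma vacY: "Y u (-1) vac = u" "n \<ge> 0 \<Longrightarrow> Y u n vac = 0" using VA unfolding vertex_algebra_def by blast+

lemma Lm1: "Lop Y om (-1) u = Y u (-2) vac"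
proof -
  have "Y (Lop Y om (-1) u) (-1) vac = sc (- of_int (-1)) (Y u (-1 - 1) vac)"
    using VOA unfolding VOA_def by blast
  thus ?thesis by (simp add: vacY)
qed

lemma ling: "Vector_Spaces.linear sc sc g" using AUT unfolding voa_aut_def va_aut_def by blast
lemma gadd: "g (a + b) = g a + g b" using ling unfolding Vector_Spaces.linear_iff by blast
lemma gsc: "g (sc t a) = sc t (g a)" using ling unfolding Vector_Spaces.linear_iff by blast
lemma gY: "g (Y u n v) = Y (g u) n (g v)" using AUT unfolding voa_aut_def va_aut_def by blast
lemma gom: "g om = om" using AUT unfolding voa_aut_def by blast
lemma gvac: "g vac = vac" using AUT unfolding voa_aut_def va_aut_def by blast
lemma ginj: "inj g" using AUT unfolding voa_aut_def va_aut_def bij_def by blast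
lemma g0: "g 0 = 0" using add_zero[of g, OF gadd] .

abbreviation W where "W k \<equiv> wtspace sc Y om k"
abbreviation R where "R k \<equiv> V.span (\<Union>j\<in>-{k}. W j)"

lemma W_iff: "v \<in> W k \<longleftrightarrow> Y om 1 v = sc (of_int k) v"
  by (simp add: wtspace_def Lop_def)

lemma W_sub: "V.subspace (W k)"
  by (rule V.subspaceI) (auto simp: W_iff Yadd1 Ysc1 V.scale_right_distrib V.scale_left_commute)

lemma Wadd: "x \<in> W k \<Longrightarrow> y \<in> W k \<Longrightarrow> x + y \<in> W k" using W_sub V.subspace_add by blast
lemma Wsc: "x \<in> W k \<Longrightarrow> sc t x \<in> W k" using W_sub V.subspace_scale by blast
lemma W0: "0 \<in> W k" using W_sub V.subspace_0 by blast

lemma Rfin: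
  assumes "x \<in> R k"
  shows "\<exists>S. finite S \<and> k \<notin> S \<and> x \<in> V.span (\<Union>j\<in>S. W j)"
  using assms
proof (induction rule: V.span_induct)
  case base
  show ?case
  proof (rule V.subspaceI; clarsimp)
    show "\<exists>S. finite S \<and> k \<notin> S \<and> 0 \<in> V.span (\<Union>j\<in>S. W j)"
      by (rule exI[of _ "{}"]) (simp add: V.span_zero)
  next
    fix x y S1 S2 assume a: "finite S1" "k \<notin> S1" "x \<in> V.span (\<Union>j\<in>S1. W j)"
      "finite S2" "k \<notin> S2" "y \<in> V.span (\<Union>j\<in>S2. W j)"
    have "x \<in> V.span (\<Union>j\<in>S1 \<union> S2. W j)" "y \<in> V.span (\<Union>j\<in>S1 \<union> S2. W j)"
      using a V.span_mono[of "\<Union>j\<in>S1. W j" "\<Union>j\<in>S1 \<union> S2. W j"]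
        V.span_mono[of "\<Union>j\<in>S2. W j" "\<Union>j\<in>S1 \<union> S2. W j"] by auto
    then show "\<exists>S. finite S \<and> k \<notin> S \<and> x + y \<in> V.span (\<Union>j\<in>S. W j)"
      using a by (intro exI[of _ "S1 \<union> S2"]) (auto intro: V.span_add)
  next
    fix t x S assume "finite S" "k \<notin> S" "x \<in> V.span (\<Union>j\<in>S. W j)"
    then show "\<exists>S. finite S \<and> k \<notin> S \<and> sc t x \<in> V.span (\<Union>j\<in>S. W j)"
      by (intro exI[of _ S]) (auto intro: V.span_scale)
  qed
next
  case (step x)
  then obtain j where "j \<noteq> k" "x \<in> W j" by auto
  then show ?case by (intro exI[of _ "{j}"]) (auto intro: V.span_base)
qed

lemma indep:
  assumes "finite S" "k \<notin> S" "x \<in> W k" "x \<in> V.span (\<Union>j\<in>S. W j)"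
  shows "x = 0"
  using assms
proof (induction S arbitrary: x rule: finite_induct)
  case empty
  then show ?case by simp
next
  case (insert j0 S)
  define f where "f v = Y om 1 v - sc (of_int j0) v" for v
  have fadd: "f (a + b) = f a + f b" for a b
    by (simp add: f_def Yadd1 V.scale_right_distrib)
  have fsc: "f (sc t a) = sc t (f a)" for t a
    by (simp add: f_def Ysc1 V.scale_right_diff_distrib V.scale_left_commute)
  have "x \<in> V.span (W j0 \<union> (\<Union>j\<in>S. W j))" using insert.prems by simp
  then obtain a b where ab: "x = a + b" "a \<in> V.span (W j0)" "b \<in> V.span (\<Union>j\<in>S. W j)"
    unfolding V.span_Un by blast
  have aW: "a \<in> W j0" using ab(2) W_sub V.span_eq_iff by blast
  have fa: "f a = 0" using aW by (simp add: f_def W_iff)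
  have fb: "f b \<in> V.span (\<Union>j\<in>S. W j)"
    using ab(3)
  proof (induction rule: V.span_induct)
    case base
    show ?case
      by (rule V.subspaceI) (auto simp: fadd fsc add_zero[of f, OF fadd] intro: V.span_add V.span_scale V.span_zero)
  next
    case (step y)
    then obtain j where j: "j \<in> S" "y \<in> W j" by auto
    then have "f y = sc (of_int j - of_int j0) y" by (simp add: f_def W_iff V.scale_left_diff_distrib)
    also have "\<dots> \<in> V.span (\<Union>j\<in>S. W j)" using j by (blast intro: V.span_scale V.span_base)
    finally show ?case by simp
  qed
  have fx: "f x = sc (of_int k - of_int j0) x"
    using insert.prems(2) by (simp add: f_def W_iff V.scale_left_diff_distrib)
  have "sc (of_int k - of_int j0) x = 0"
  proof (rule insert.IH)
    show "k \<notin> S" using insert.prems by simp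
    show "sc (of_int k - of_int j0) x \<in> W k" using insert.prems(2) by (rule Wsc)
    show "sc (of_int k - of_int j0) x \<in> V.span (\<Union>j\<in>S. W j)"
    proof -
      have "f x = f a + f b" using ab(1) fadd by simp
      hence "f x = f b" using fa by simp
      thus ?thesis using fx fb by simp
    qed
  qed
  moreover have "of_int k - of_int j0 \<noteq> (0::complex)" using insert.prems(1) by simp
  ultimately show ?case by simp
qed

lemma WR: "x \<in> W k \<Longrightarrow> x \<in> R k \<Longrightarrow> x = 0"
  using Rfin indep by blast

lemma decomp: "\<exists>S f. finite S \<and> (\<forall>k\<in>S. f k \<in> W k) \<and> v = (\<Sum>k\<in>S. f k)"
proof -
  obtain S where S: "finite S" "v \<in> V.span (\<Union>k\<in>S. W k)"
    using VOA unfolding VOA_def by blast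
  have "\<exists>f. (\<forall>k\<in>S. f k \<in> W k) \<and> v = (\<Sum>k\<in>S. f k)"
    using S(2)
  proof (induction rule: V.span_induct)
    case base
    show ?case
    proof (rule V.subspaceI)
      show "0 \<in> {v. \<exists>f. (\<forall>k\<in>S. f k \<in> W k) \<and> v = sum f S}"
        by (auto intro!: exI[of _ "\<lambda>_. 0"] simp: W0)
    next
      fix x y assume "x \<in> {v. \<exists>f. (\<forall>k\<in>S. f k \<in> W k) \<and> v = sum f S}" "y \<in> {v. \<exists>f. (\<forall>k\<in>S. f k \<in> W k) \<and> v = sum f S}"
      then obtain f1 f2 where "\<forall>k\<in>S. f1 k \<in> W k" "x = sum f1 S" "\<forall>k\<in>S. f2 k \<in> W k" "y = sum f2 S" by blast
      then show "x + y \<in> {v. \<exists>f. (\<forall>k\<in>S. f k \<in> W k) \<and> v = sum f S}"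
        by (auto intro!: exI[of _ "\<lambda>k. f1 k + f2 k"] simp: Wadd sum.distrib)
    next
      fix t x assume "x \<in> {v. \<exists>f. (\<forall>k\<in>S. f k \<in> W k) \<and> v = sum f S}"
      then obtain f1 where "\<forall>k\<in>S. f1 k \<in> W k" "x = sum f1 S" by blast
      then show "sc t x \<in> {v. \<exists>f. (\<forall>k\<in>S. f k \<in> W k) \<and> v = sum f S}"
        by (auto intro!: exI[of _ "\<lambda>k. sc t (f1 k)"] simp: Wsc V.scale_sum_right)
    qed
  next
    case (step x)
    then obtain j where j: "j \<in> S" "x \<in> W j" by auto
    show ?case
      by (rule exI[of _ "\<lambda>k. if k = j then x else 0"]) (use j S(1) in \<open>auto simp: W0\<close>)
  qed
  with S show ?thesis by blast
qed

lemma wtp_unique: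
  assumes "w \<in> W k" "v - w \<in> R k"
  shows "wtproj sc Y om k v = w"
  unfolding wtproj_def
proof (rule the_equality)
  show "w \<in> W k \<and> v - w \<in> R k" using assms by simp
  fix w' assume a: "w' \<in> W k \<and> v - w' \<in> R k"
  have "w' - w \<in> W k" using a assms W_sub V.subspace_diff by blast
  moreover have "w' - w \<in> R k"
    using V.span_diff[OF assms(2) conjunct2[OF a]] by (simp add: algebra_simps)
  ultimately have "w' - w = 0" by (rule WR)
  thus "w' = w" by simp
qed

lemma wtp_sum:
  assumes "finite S" "\<forall>j\<in>S. f j \<in> W j"
  shows "wtproj sc Y om k (\<Sum>j\<in>S. f j) = (if k \<in> S then f k else 0)"
proof (cases "k \<in> S")
  case True
  have "(\<Sum>j\<in>S. f j) - f k = (\<Sum>j\<in>S - {k}. f j)"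
    using True assms(1) by (simp add: sum_diff1)
  also have "\<dots> \<in> R k"
    using assms by (intro V.span_sum V.span_base) auto
  finally show ?thesis using True assms by (simp add: wtp_unique)
next
  case False
  have "(\<Sum>j\<in>S. f j) - 0 \<in> R k"
    using assms False by simp (intro V.span_sum V.span_base, auto)
  then show ?thesis using False by (simp add: wtp_unique W0)
qed

lemma wtp_ex: "\<exists>w. w \<in> W k \<and> v - w \<in> R k"
proof -
  obtain S f where Sf: "finite S" "\<forall>k\<in>S. f k \<in> W k" "v = (\<Sum>k\<in>S. f k)" using decomp by blast
  have "wtproj sc Y om k v = (if k \<in> S then f k else 0)" using Sf wtp_sum by simp
  hence "wtproj sc Y om k v \<in> W k" using Sf W0 by auto
  moreover have "v - wtproj sc Y om k v \<in> R k"
  proof (cases "k \<in> S")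
    case True
    have "v - f k = (\<Sum>j\<in>S - {k}. f j)" using True Sf by (simp add: sum_diff1)
    also have "\<dots> \<in> R k" using Sf by (intro V.span_sum V.span_base) auto
    finally show ?thesis using True \<open>wtproj sc Y om k v = _\<close> by simp
  next
    case False
    have "v \<in> R k" using Sf False by simp (intro V.span_sum V.span_base, auto)
    thus ?thesis using False \<open>wtproj sc Y om k v = _\<close> by simp
  qed
  ultimately show ?thesis by blast
qed

lemma wtp_W: "wtproj sc Y om k v \<in> W k" and wtp_R: "v - wtproj sc Y om k v \<in> R k"
proof -
  obtain w where w: "w \<in> W k" "v - w \<in> R k" using wtp_ex by blast
  then have e: "wtproj sc Y om k v = w" by (rule wtp_unique)
  show "wtproj sc Y om k v \<in> W k" unfolding e by (rule w(1))
  show "v - wtproj sc Y om k v \<in> R k" unfolding e by (rule w(2))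
qed

lemma wts_decomp: "finite (wts sc Y om v) \<and> v = (\<Sum>k\<in>wts sc Y om v. wtproj sc Y om k v)"
proof -
  obtain S f where Sf: "finite S" "\<forall>k\<in>S. f k \<in> W k" "v = (\<Sum>k\<in>S. f k)" using decomp by blast
  have p: "wtproj sc Y om k v = (if k \<in> S then f k else 0)" for k using Sf wtp_sum by simp
  have sub: "wts sc Y om v \<subseteq> S" unfolding wts_def using p by auto
  have fin: "finite (wts sc Y om v)" using sub Sf(1) finite_subset by blast
  have "v = (\<Sum>k\<in>S. wtproj sc Y om k v)" using Sf p by simp
  also have "\<dots> = (\<Sum>k\<in>wts sc Y om v. wtproj sc Y om k v)"
    by (rule sum.mono_neutral_right[OF Sf(1) sub]) (auto simp: wts_def)
  finally show ?thesis using fin by blast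
qed

lemma wtp_hom: "x \<in> W k \<Longrightarrow> wtproj sc Y om k x = x"
  by (rule wtp_unique) (auto simp: V.span_zero)
lemma wtp_hom0: "x \<in> W k \<Longrightarrow> j \<noteq> k \<Longrightarrow> wtproj sc Y om j x = 0"
  by (rule wtp_unique) (auto simp: W0 intro!: V.span_base)

definition good where "good \<phi> \<longleftrightarrow> (\<forall>a b. \<phi> (a + b) = \<phi> a + \<phi> b) \<and> (\<forall>t a. \<phi> (sc t a) = sc t (\<phi> a))
   \<and> (\<forall>k. \<forall>x\<in>W k. \<phi> x \<in> W k)"

lemma good_0: "good \<phi> \<Longrightarrow> \<phi> 0 = 0" unfolding good_def using add_zero[of \<phi>] by blast

lemma good_R: assumes "good \<phi>" "x \<in> R k" shows "\<phi> x \<in> R k"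
  using assms(2)
proof (induction rule: V.span_induct)
  case base
  show ?case using assms(1) unfolding good_def
    by (intro V.subspaceI) (auto simp: good_0[OF assms(1)] V.span_zero intro: V.span_add V.span_scale)
next
  case (step x)
  then obtain j where j: "j \<noteq> k" "x \<in> W j" by auto
  then have "\<phi> x \<in> W j" using assms(1) unfolding good_def by blast
  then show ?case using j by (blast intro: V.span_base)
qed

lemma good_wtp: assumes "good \<phi>" shows "wtproj sc Y om k (\<phi> v) = \<phi> (wtproj sc Y om k v)"
proof (rule wtp_unique)
  show "\<phi> (wtproj sc Y om k v) \<in> W k" using assms wtp_W unfolding good_def by blast
  have "\<phi> v - \<phi> (wtproj sc Y om k v) = \<phi> (v - wtproj sc Y om k v)"
    using assms add_diff[of \<phi>] unfolding good_def by metis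
  also have "\<dots> \<in> R k" using good_R[OF assms wtp_R] .
  finally show "\<phi> v - \<phi> (wtproj sc Y om k v) \<in> R k" .
qed

lemma good_g: "good g"
proof -
  have "Y om 1 (g x) = sc (of_int k) (g x)" if "Y om 1 x = sc (of_int k) x" for k x
    using gY[of om 1 x] that by (simp add: gom gsc)
  then show ?thesis unfolding good_def by (auto simp: gadd gsc W_iff)
qed

lemma good_id: "good (\<lambda>x. x)" unfolding good_def by auto

lemma good_comp: "good \<phi> \<Longrightarrow> good \<psi> \<Longrightarrow> good (\<lambda>x. \<phi> (\<psi> x))" unfolding good_def by auto

lemma good_pow: "good (g ^^ j)"
  by (induction j) (auto simp: good_id good_g intro: good_comp[OF good_g, unfolded comp_def])

lemma good_lin: assumes "\<And>j. j \<in> J \<Longrightarrow> good (\<phi> j)"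
  shows "good (\<lambda>v. sc a (\<Sum>j\<in>J. sc (b j) (\<phi> j v)))"
  unfolding good_def
proof (intro conjI allI ballI)
  fix x y show "sc a (\<Sum>j\<in>J. sc (b j) (\<phi> j (x + y))) = sc a (\<Sum>j\<in>J. sc (b j) (\<phi> j x)) + sc a (\<Sum>j\<in>J. sc (b j) (\<phi> j y))"
    using assms unfolding good_def by (simp add: V.scale_right_distrib sum.distrib)
next
  fix t x show "sc a (\<Sum>j\<in>J. sc (b j) (\<phi> j (sc t x))) = sc t (sc a (\<Sum>j\<in>J. sc (b j) (\<phi> j x)))"
    using assms unfolding good_def by (simp add: V.scale_sum_right mult.commute mult.left_commute)
next
  fix k x assume "x \<in> W k"
  then show "sc a (\<Sum>j\<in>J. sc (b j) (\<phi> j x)) \<in> W k"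
    using assms unfolding good_def by (intro Wsc V.subspace_sum[OF W_sub]) auto
qed

lemma good_gproj: "good (gproj sc g T r)"
  unfolding gproj_def[abs_def] by (rule good_lin) (rule good_pow)

end

unbundle fps_syntax

abbreviation ex :: "complex \<Rightarrow> complex fls" where "ex a \<equiv> fps_to_fls (fps_exp a)"
abbreviation EE :: "complex fls" where "EE \<equiv> ex 1 - 1"
lemma EE_def': "fps_to_fls (fps_exp 1 - 1) = EE" by simp

lemma ex_mult: "ex a * ex b = ex (a + b)"
  by (simp add: fps_exp_add_mult fls_times_fps_to_fls)

lemma ex1: "ex 1 = EE + 1" by simp


lemma EE_sub: "fls_subdegree EE = 1"
proof -
  have "subdegree (fps_exp (1::complex) - 1) = 1"
    by (rule subdegreeI) auto
  thus ?thesis using fls_subdegree_fls_to_fps[of "fps_exp (1::complex) - 1"] by simp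
qed

lemma EE_nz: "EE \<noteq> 0" using EE_sub by force

lemma deriv_ex: "fls_deriv (ex a) = fls_const a * ex a"
  by (simp add: fls_deriv_fps_to_fls fls_times_fps_to_fls)

lemma deriv_EE: "fls_deriv EE = ex 1"
  by (simp add: fls_deriv_fps_to_fls)

lemma ex_sub: "fls_subdegree (ex a) = 0"
proof -
  have "subdegree (fps_exp a) = 0" by (rule subdegreeI) auto
  thus ?thesis by (simp add: fls_subdegree_fls_to_fps)
qed

lemma res_base: "(ex a * inverse EE) $$ (-1) = 1"
proof -
  have "(ex a * inverse EE) $$ (-1) = (\<Sum>i=0..(-1) - (-1). ex a $$ i * inverse EE $$ (-1 - i))"
    using fls_times_nth(2)[of "ex a" "inverse EE" "-1"] by (simp only: ex_sub EE_sub fls_inverse_subdegree)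
  also have "\<dots> = inverse EE $$ (-1)" by simp
  also have "\<dots> = 1" using fls_inverse_subdegree_base[of EE] by (simp add: EE_sub)
  finally show ?thesis .
qed

lemma res_rec: "a * (ex a * inverse EE ^ N) $$ (-1) = of_nat N * (ex (a+1) * inverse EE ^ (Suc N)) $$ (-1)"
proof -
  have "fls_deriv (ex a * inverse EE ^ N) = ex a * (of_nat N * inverse EE ^ (N - 1) * (- ex 1 * (inverse EE)\<^sup>2))
      + fls_const a * ex a * inverse EE ^ N"
    by (simp add: fls_deriv_power fls_inverse_deriv deriv_ex deriv_EE)
  also have "\<dots> = fls_const a * (ex a * inverse EE ^ N) - of_nat N * (ex (a+1) * inverse EE ^ Suc N)"
  proof (cases N)
    case 0 then show ?thesis by simp
  next
    case (Suc M) then show ?thesis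
      by (simp add: ex_mult[symmetric] power2_eq_square algebra_simps)
  qed
  finally have "fls_deriv (ex a * inverse EE ^ N) $$ (-1) = (fls_const a * (ex a * inverse EE ^ N) - of_nat N * (ex (a+1) * inverse EE ^ Suc N)) $$ (-1)"
    by (rule arg_cong)
  hence "0 = (fls_const a * (ex a * inverse EE ^ N) - of_nat N * (ex (a+1) * inverse EE ^ Suc N)) $$ (-1)"
    by (simp only: fls_deriv_residue)
  thus ?thesis by (simp del: power_Suc)
qed

lemma res_main: "(ex a * inverse EE ^ (Suc N)) $$ (-1) = (a - 1) gchoose N"
proof (induction N arbitrary: a)
  case 0 then show ?case using res_base by simp
next
  case (Suc N)
  have "(a - 1) * (ex (a-1) * inverse EE ^ Suc N) $$ (-1) = of_nat (Suc N) * (ex a * inverse EE ^ (Suc (Suc N))) $$ (-1)"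
    using res_rec[of "a-1" "Suc N"] by simp
  moreover have "(ex (a-1) * inverse EE ^ Suc N) $$ (-1) = (a - 1 - 1) gchoose N" using Suc by simp
  moreover have "of_nat (Suc N) * ((a - 1) gchoose Suc N) = (a - 1) * ((a - 1 - 1) gchoose N)"
    by (rule gbinomial_absorption)
  ultimately show ?case
    by (metis (no_types, lifting) mult_cancel_left of_nat_eq_0_iff nat.distinct(1))
qed


lemma expfrac_eq: "expfrac b K = ex b * EE powi (-K)"
  unfolding expfrac_def by simp

lemma expfrac_low: "n < -K \<Longrightarrow> expfrac b K $$ n = 0"
  unfolding expfrac_eq by (rule fls_times_nth_eq0) (simp add: ex_sub EE_sub)

lemma expfrac_res:
  assumes "K + L \<ge> 1"
  shows "(expfrac b K * expfrac d L) $$ (-1) = (b + d - 1) gchoose nat (K + L - 1)"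
proof -
  obtain m where m: "K + L = int (Suc m)" using assms by (metis add.commute nat_int zle_iff_zadd Suc_eq_plus1 add_le_imp_le_left int_Suc of_nat_0_le_iff)
  have "expfrac b K * expfrac d L = (ex b * ex d) * (EE powi (-K) * EE powi (-L))"
    unfolding expfrac_eq by (simp add: algebra_simps)
  also have "\<dots> = ex (b + d) * EE powi (-(K+L))"
    by (simp add: ex_mult power_int_add[symmetric] EE_nz)
  also have "EE powi (-(K+L)) = inverse EE ^ Suc m"
    unfolding m power_int_minus power_int_of_nat by (simp add: power_inverse del: power_Suc)
  finally have "(expfrac b K * expfrac d L) $$ (-1) = (ex (b+d) * inverse EE ^ Suc m) $$ (-1)" by simp
  also have "\<dots> = (b + d - 1) gchoose m" by (rule res_main)
  finally show ?thesis using m by simp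
qed

lemma times_nth_set:
  fixes f g :: "'a::{comm_ring_1} fls"
  assumes "finite J" "\<And>j. j \<notin> J \<Longrightarrow> f $$ j * g $$ (n - j) = 0"
  shows "(f * g) $$ n = (\<Sum>j\<in>J. f $$ j * g $$ (n - j))"
proof -
  let ?df = "fls_subdegree f" and ?dg = "fls_subdegree g"
  have z: "f $$ j * g $$ (n - j) = 0" if "j \<notin> {?df..n - ?dg}" for j
  proof -
    have "j < ?df \<or> n - j < ?dg" using that by auto
    then show ?thesis by (auto simp: fls_eq0_below_subdegree)
  qed
  have "(f * g) $$ n = (\<Sum>j\<in>{?df..n - ?dg}. f $$ j * g $$ (n - j))" by (rule fls_times_nth(2))
  also have "\<dots> = (\<Sum>j\<in>{?df..n - ?dg} \<union> J. f $$ j * g $$ (n - j))"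
    by (rule sum.mono_neutral_left) (use assms z in auto)
  also have "\<dots> = (\<Sum>j\<in>J. f $$ j * g $$ (n - j))"
    by (rule sum.mono_neutral_right) (use assms z in auto)
  finally show ?thesis .
qed

context ctx begin

definition Ek where "Ek k x n v = fsum (\<lambda>j::int. sc (expfrac (of_int k) (j + 1) $$ (- n - 1)) (Y x j v))"

lemma expY_def': "expY sc Y om u n v = (\<Sum>k\<in>wts sc Y om u. Ek k (wtproj sc Y om k u) n v)"
  unfolding expY_def Ek_def by simp

lemma Ek_0: "Ek k 0 n v = 0" unfolding Ek_def fsum_def by simp

lemma Ek_set:
  assumes "\<And>i. i \<ge> N \<Longrightarrow> Y x i v = 0" "{n..<N} \<subseteq> J" "finite J"
  shows "Ek k x n v = (\<Sum>i\<in>J. sc (expfrac (of_int k) (i + 1) $$ (- n - 1)) (Y x i v))"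
  unfolding Ek_def
proof (rule fsum_eq[OF assms(3)])
  fix i assume i: "i \<notin> J"
  show "sc (expfrac (of_int k) (i + 1) $$ (- n - 1)) (Y x i v) = 0"
  proof (cases "i < n")
    case True then show ?thesis by (simp add: expfrac_low)
  next
    case False
    have "i \<ge> N"
    proof (rule ccontr)
      assume "\<not> N \<le> i"
      then have "i \<in> {n..<N}" using False by auto
      with i assms(2) show False by blast
    qed
    then show ?thesis using assms(1) by simp
  qed
qed

lemma Ek_high:
  assumes "\<And>i. i \<ge> N \<Longrightarrow> Y x i v = 0" "n \<ge> N"
  shows "Ek k x n v = 0"
  using Ek_set[OF assms(1), where J="{}" and n=n] assms(2) by simp

lemma expY_gen:
  assumes "finite S" "wts sc Y om u \<subseteq> S"
  shows "expY sc Y om u n v = (\<Sum>k\<in>S. Ek k (wtproj sc Y om k u) n v)"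
  unfolding expY_def'
  by (rule sum.mono_neutral_left) (use assms in \<open>auto simp: wts_def Ek_0\<close>)

lemma expY_hom:
  assumes "x \<in> W k"
  shows "expY sc Y om x n v = Ek k x n v"
proof -
  have "wts sc Y om x \<subseteq> {k}" using wtp_hom0[OF assms] by (auto simp: wts_def)
  then show ?thesis using expY_gen[of "{k}" x n v] wtp_hom[OF assms] by simp
qed

end

unbundle fps_syntax

context ctx begin

lemma CORE:
  assumes "x \<in> W k"
  shows "resx sc (expY sc Y om) (expfrac b K) x v = resz sc Y (of_int k - 1 + b) K x v"
proof -
  obtain N where N: "\<And>i. i \<ge> N \<Longrightarrow> Y x i v = 0" using trunc by blast
  define J where "J = {-K..<N}"
  have fJ: "finite J" by (simp add: J_def)
  define F where "F = expfrac b K"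
  define G where "G i = expfrac (of_int k) (i+1)" for i
  have E: "Ek k x j v = (\<Sum>i\<in>J. sc (G i $$ (-j-1)) (Y x i v))" if "j \<in> J" for j
    unfolding G_def by (rule Ek_set[OF N]) (use that in \<open>auto simp: J_def\<close>)
  have "resx sc (expY sc Y om) F x v = (\<Sum>j\<in>J. sc (F $$ j) (expY sc Y om x j v))"
    unfolding resx_def
  proof (rule fsum_eq[OF fJ])
    fix j assume "j \<notin> J"
    then have "j < -K \<or> j \<ge> N" by (auto simp: J_def add.commute)
    then show "sc (F $$ j) (expY sc Y om x j v) = 0"
      using expfrac_low[of j K b] expY_hom[OF assms] Ek_high[OF N] unfolding F_def by auto
  qed
  also have "\<dots> = (\<Sum>j\<in>J. sc (F $$ j) (\<Sum>i\<in>J. sc (G i $$ (-j-1)) (Y x i v)))"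
    by (rule sum.cong[OF refl]) (simp add: E expY_hom[OF assms])
  also have "\<dots> = (\<Sum>j\<in>J. \<Sum>i\<in>J. sc (F $$ j * G i $$ (-j-1)) (Y x i v))"
    by (simp add: V.scale_sum_right algebra_simps)
  also have "\<dots> = (\<Sum>i\<in>J. \<Sum>j\<in>J. sc (F $$ j * G i $$ (-j-1)) (Y x i v))"
    by (rule sum.swap)
  also have "\<dots> = (\<Sum>i\<in>J. sc (\<Sum>j\<in>J. F $$ j * G i $$ (-j-1)) (Y x i v))"
    by (simp add: V.scale_sum_left)
  also have "\<dots> = (\<Sum>i\<in>J. sc ((of_int k - 1 + b) gchoose nat (K + i)) (Y x i v))"
  proof (rule sum.cong[OF refl])
    fix i assume i: "i \<in> J"
    have "(\<Sum>j\<in>J. F $$ j * G i $$ (-j-1)) = (F * G i) $$ (-1)"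
    proof -
      have "(F * G i) $$ (-1) = (\<Sum>j\<in>J. F $$ j * G i $$ (-1 - j))"
      proof (rule times_nth_set[OF fJ])
        fix j assume "j \<notin> J"
        then have "j < -K \<or> j \<ge> N" by (auto simp: J_def add.commute)
        moreover have "i < N" using i by (simp add: J_def)
      ultimately show "F $$ j * G i $$ (-1 - j) = 0"
        unfolding F_def G_def using expfrac_low by auto
      qed
      moreover have "(-1 - j) = (-j-1)" for j :: int by simp
      ultimately show ?thesis by simp
    qed
    also have "\<dots> = (b + of_int k - 1) gchoose nat (K + (i+1) - 1)"
      unfolding F_def G_def by (rule expfrac_res) (use i in \<open>simp add: J_def\<close>)
    finally show "sc (\<Sum>j\<in>J. F $$ j * G i $$ (-j-1)) (Y x i v) = sc ((of_int k - 1 + b) gchoose nat (K + i)) (Y x i v)"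
      by (simp add: algebra_simps)
  qed
  also have "\<dots> = (\<Sum>j\<in>{..<nat (N + K)}. sc ((of_int k - 1 + b) gchoose j) (Y x (int j - K) v))"
    by (rule sum.reindex_bij_witness[where i="\<lambda>a. int a - K" and j="\<lambda>b. nat (b + K)"]) (auto simp: J_def add.commute)
  also have "\<dots> = resz sc Y (of_int k - 1 + b) K x v"
    unfolding resz_def
  proof (rule fsum_eq[symmetric])
    fix j assume "j \<notin> {..<nat (N + K)}"
    then have "int j - K \<ge> N" by auto
    then show "sc ((of_int k - 1 + b) gchoose j) (Y x (int j - K) v) = 0" using N by simp
  qed simp
  finally show ?thesis unfolding F_def .
qed

end

unbundle fps_syntax

lemma fsum_sum_swap:
  assumes "finite S" "finite J" "\<And>k j. k \<in> S \<Longrightarrow> j \<notin> J \<Longrightarrow> h k j = 0"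
  shows "fsum (\<lambda>j. \<Sum>k\<in>S. h k j) = (\<Sum>k\<in>S. fsum (h k))"
proof -
  have "fsum (\<lambda>j. \<Sum>k\<in>S. h k j) = (\<Sum>j\<in>J. \<Sum>k\<in>S. h k j)"
    by (rule fsum_eq[OF assms(2)]) (simp add: assms(3))
  also have "\<dots> = (\<Sum>k\<in>S. \<Sum>j\<in>J. h k j)" by (rule sum.swap)
  also have "\<dots> = (\<Sum>k\<in>S. fsum (h k))"
    by (rule sum.cong[OF refl], rule fsum_eq[symmetric, OF assms(2)]) (simp add: assms(3))
  finally show ?thesis .
qed

lemma uniform_bound:
  fixes P :: "'a \<Rightarrow> int \<Rightarrow> bool"
  assumes "finite S" "\<And>k. k \<in> S \<Longrightarrow> \<exists>N. \<forall>i\<ge>N. P k i"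
  shows "\<exists>N. \<forall>k\<in>S. \<forall>i\<ge>N. P k i"
  using assms
proof (induction S rule: finite_induct)
  case empty then show ?case by simp
next
  case (insert a S)
  obtain N1 where N1: "\<forall>k\<in>S. \<forall>i\<ge>N1. P k i" using insert by blast
  obtain N2 where N2: "\<forall>i\<ge>N2. P a i" using insert by blast
  show ?case by (rule exI[of _ "max N1 N2"]) (use N1 N2 in auto)
qed

context ctx begin

lemma resx_lin:
  assumes "finite S" "wts sc Y om y \<subseteq> S"
  shows "resx sc (expY sc Y om) F y v = (\<Sum>k\<in>S. resx sc (expY sc Y om) F (wtproj sc Y om k y) v)"
proof -
  obtain N where N: "\<forall>k\<in>S. \<forall>i\<ge>N. Y (wtproj sc Y om k y) i v = 0"
    using uniform_bound[OF assms(1), of "\<lambda>k i. Y (wtproj sc Y om k y) i v = 0"] trunc by blast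
  have "resx sc (expY sc Y om) F y v = fsum (\<lambda>j. \<Sum>k\<in>S. sc (F $$ j) (Ek k (wtproj sc Y om k y) j v))"
    unfolding resx_def expY_gen[OF assms] by (simp add: V.scale_sum_right)
  also have "\<dots> = (\<Sum>k\<in>S. fsum (\<lambda>j. sc (F $$ j) (Ek k (wtproj sc Y om k y) j v)))"
  proof (rule fsum_sum_swap[OF assms(1), of "{fls_subdegree F..<N}"])
    fix k j assume k: "k \<in> S" and j: "j \<notin> {fls_subdegree F..<N}"
    show "sc (F $$ j) (Ek k (wtproj sc Y om k y) j v) = 0"
    proof (cases "j < fls_subdegree F")
      case True then show ?thesis by (simp add: fls_eq0_below_subdegree)
    next
      case False
      then have "j \<ge> N" using j by auto
      then show ?thesis using Ek_high[of N "wtproj sc Y om k y" v j k] N k by auto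
    qed
  qed simp
  also have "\<dots> = (\<Sum>k\<in>S. resx sc (expY sc Y om) F (wtproj sc Y om k y) v)"
    unfolding resx_def by (simp add: expY_hom[OF wtp_W])
  finally show ?thesis .
qed

lemma gproj_hom: "x \<in> W k \<Longrightarrow> gproj sc g T r x \<in> W k"
  using good_gproj unfolding good_def by blast

lemma wts_gproj: "wts sc Y om (gproj sc g T r u) \<subseteq> wts sc Y om u"
  unfolding wts_def using good_wtp[OF good_gproj] good_0[OF good_gproj] by auto

lemma wts_fin: "finite (wts sc Y om u)" using wts_decomp by blast

lemma alpha_eq: "(of_int (k - 1 + int a + d) + b :: complex) = of_int k - 1 + (of_int (int a + d) + b)"
  by simp

lemma alpha_eq2: "(of_int (d + int a) + b :: complex) = (of_int (int a + d) + b)"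
  by (simp add: add.commute)

lemma BH_hom:
  assumes "x \<in> W k"
  shows "bulletH sc (expY sc Y om) T r m p n x v = vstarH sc Y T k r m p n x v"
  unfolding bulletH_def vstarH_def Let_def
  by (simp only: CORE[OF assms] alpha_eq)

lemma BH_lin:
  assumes "finite S" "wts sc Y om y \<subseteq> S"
  shows "bulletH sc (expY sc Y om) T r m p n y v = (\<Sum>k\<in>S. bulletH sc (expY sc Y om) T r m p n (wtproj sc Y om k y) v)"
  unfolding bulletH_def Let_def resx_lin[OF assms]
  by (simp add: V.scale_sum_right sum.swap[of _ S])

lemma DH_hom:
  assumes "x \<in> W k"
  shows "diamondH sc (expY sc Y om) T r m n x v = vcircH sc Y T k r m n x v"
  unfolding diamondH_def vcircH_def
  by (simp only: CORE[OF assms] alpha_eq alpha_eq2)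

lemma DH_lin:
  assumes "finite S" "wts sc Y om y \<subseteq> S"
  shows "diamondH sc (expY sc Y om) T r m n y v = (\<Sum>k\<in>S. diamondH sc (expY sc Y om) T r m n (wtproj sc Y om k y) v)"
  unfolding diamondH_def by (rule resx_lin[OF assms])

lemma E1: "vstar sc Y om g T m p n u v = bullet sc (expY sc Y om) g T m p n u v"
proof -
  have "bullet sc (expY sc Y om) g T m p n u v
      = (\<Sum>r<T. \<Sum>k\<in>wts sc Y om u. bulletH sc (expY sc Y om) T r m p n (wtproj sc Y om k (gproj sc g T r u)) v)"
    unfolding bullet_def by (rule sum.cong[OF refl], rule BH_lin[OF wts_fin wts_gproj])
  also have "\<dots> = (\<Sum>r<T. \<Sum>k\<in>wts sc Y om u. vstarH sc Y T k r m p n (gproj sc g T r (wtproj sc Y om k u)) v)"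
    by (simp add: good_wtp[OF good_gproj] BH_hom[OF gproj_hom[OF wtp_W]])
  also have "\<dots> = vstar sc Y om g T m p n u v"
    unfolding vstar_def by (rule sum.swap)
  finally show ?thesis by simp
qed

lemma E2: "vcirc sc Y om g T m n u v = diamond sc (expY sc Y om) g T m n u v"
proof -
  have "diamond sc (expY sc Y om) g T m n u v
      = (\<Sum>r<T. \<Sum>k\<in>wts sc Y om u. diamondH sc (expY sc Y om) T r m n (wtproj sc Y om k (gproj sc g T r u)) v)"
    unfolding diamond_def by (rule sum.cong[OF refl], rule DH_lin[OF wts_fin wts_gproj])
  also have "\<dots> = (\<Sum>r<T. \<Sum>k\<in>wts sc Y om u. vcircH sc Y T k r m n (gproj sc g T r (wtproj sc Y om k u)) v)"
    by (simp add: good_wtp[OF good_gproj] DH_hom[OF gproj_hom[OF wtp_W]])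
  also have "\<dots> = vcirc sc Y om g T m n u v"
    unfolding vcirc_def by (rule sum.swap)
  finally show ?thesis by simp
qed

lemma Ek_vac:
  assumes "x \<in> W k"
  shows "Ek k x (-2) vac = Y x (-2) vac + sc (of_int k) x"
proof -
  have "Ek k x (-2) vac = (\<Sum>i\<in>{-2,-1}. sc (expfrac (of_int k) (i + 1) $$ (- (-2) - 1)) (Y x i vac))"
    by (rule Ek_set[where N=0]) (auto simp: vacY)
  also have "\<dots> = sc (expfrac (of_int k) (-1) $$ 1) (Y x (-2) vac) + sc (expfrac (of_int k) 0 $$ 1) (Y x (-1) vac)"
    by simp
  also have "expfrac (of_int k) 0 $$ 1 = of_int k" by (simp add: expfrac_eq)
  also have "expfrac (of_int k) (-1) $$ 1 = 1"
  proof -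
    have "expfrac (of_int k) (-1) = ex (of_int k) * (ex 1 - 1)" by (simp add: expfrac_eq)
    also have "\<dots> = ex (of_int k + 1) - ex (of_int k)" by (simp add: algebra_simps ex_mult)
    finally show ?thesis by simp
  qed
  finally show ?thesis by (simp add: vacY add.commute)
qed

lemma E3: "expY sc Y om u (-2) vac = Lop Y om (-1) u + Lop Y om 0 u"
proof -
  let ?S = "wts sc Y om u" and ?p = "\<lambda>k. wtproj sc Y om k u"
  have d: "u = (\<Sum>k\<in>?S. ?p k)" using wts_decomp by blast
  have "expY sc Y om u (-2) vac = (\<Sum>k\<in>?S. Y (?p k) (-2) vac + sc (of_int k) (?p k))"
    unfolding expY_def' by (simp add: Ek_vac[OF wtp_W])
  also have "\<dots> = (\<Sum>k\<in>?S. Y (?p k) (-2) vac) + (\<Sum>k\<in>?S. Y om 1 (?p k))"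
    using wtp_W by (simp add: sum.distrib W_iff)
  also have "\<dots> = Y u (-2) vac + Y om 1 u"
    using d Ysum1 Ysum2 by metis
  finally show ?thesis using Lm1[of u] unfolding Lop_def by simp
qed

lemma Ek_g: "g (Ek k x n v) = Ek k (g x) n (g v)"
  unfolding Ek_def by (simp add: add_fsum[OF gadd ginj] gsc gY)

lemma E4: "g (expY sc Y om u n v) = expY sc Y om (g u) n (g v)"
proof -
  have w: "wts sc Y om (g u) = wts sc Y om u"
    unfolding wts_def using good_wtp[OF good_g] ginj g0 by (auto simp: inj_def)
  show ?thesis
    unfolding expY_def' w by (simp add: add_sum[OF gadd] Ek_g good_wtp[OF good_g])
qed

end

theorem lemma8p7:
  fixes sc :: "complex \<Rightarrow> 'v::ab_group_add \<Rightarrow> 'v"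
    and Y :: "'v \<Rightarrow> int \<Rightarrow> 'v \<Rightarrow> 'v"
    and vac om :: 'v and c :: complex and g :: "'v \<Rightarrow> 'v" and T :: nat
  assumes "VOA sc Y vac om c"
    and "voa_aut sc Y vac om g"
    and "finite_order g T"
  shows "va_aut sc (expY sc Y om) vac g
    \<and> (\<forall>n. O1V sc Y om g T n n = O1A sc (expY sc Y om) vac g T n n
         \<and> (\<forall>u v. vstar sc Y om g T n n n u v - bullet sc (expY sc Y om) g T n n n u v
                   \<in> O1V sc Y om g T n n))
    \<and> (\<forall>n m. Ofull sc (vstar sc Y om g T) (O1V sc Y om g T) n m
             = Ofull sc (bullet sc (expY sc Y om) g T) (O1A sc (expY sc Y om) vac g T) n m
         \<and> (\<forall>u v. vstar sc Y om g T m n n u v - bullet sc (expY sc Y om) g T m n n u v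
                   \<in> Ofull sc (vstar sc Y om g T) (O1V sc Y om g T) n m)
         \<and> (\<forall>u v. vstar sc Y om g T m m n u v - bullet sc (expY sc Y om) g T m m n u v
                   \<in> Ofull sc (vstar sc Y om g T) (O1V sc Y om g T) n m))"
proof -
  interpret ctx sc Y vac om c g by unfold_locales (rule assms(1), rule assms(2))
  have VA': "va_aut sc (expY sc Y om) vac g"
    using assms(2) E4 unfolding voa_aut_def va_aut_def by blast
  have f1: "vstar sc Y om g T = bullet sc (expY sc Y om) g T" by (intro ext) (rule E1)
  have f2: "O1V sc Y om g T n m = O1A sc (expY sc Y om) vac g T n m" for n m
    unfolding O1V_def O1A_def by (simp add: E2 E3)
  have f3: "O1V sc Y om g T = O1A sc (expY sc Y om) vac g T" by (intro ext) (rule f2)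
  show ?thesis using VA' by (simp add: f1 f3 V.span_zero O1A_def Ofull_def)
qed

end
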